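(* Let $n\ge4$ be even. For each $1\le i\le n-1$, $Y_i=\{z\in\mathcal F_n: z(1)=i+1\}$. Consequently $\mathcal F_n=Y_1\sqcup Y_2\sqcup\cdots\sqcup Y_{n-1}$.
   Context: $\mathcal F_m$ is the set of fixed-point-free involutions in $S_m$; $s_i=(i,i+1)$; permutations compose right to left and $z(i)$ is the image of $i$. Regard $\mathcal F_{n-2}\subset S_n$ (fixing $n-1,n$). With $w_0$ the longest element of $S_n$, $\rho(z)=w_0zs_{n-1}w_0$ for $z\in\mathcal F_{n-2}$, $Y_1=\rho(\mathcal F_{n-2})$, $\sigma_i=s_is_{i-1}\cdots s_1$, and $Y_i=\sigma_iY_1\sigma_i^{-1}$. *)

theory Defs
  imports "HOL-Combinatorics.Combinatorics"
begin

text \<open>Permutations of S_n are functions nat => nat permuting {1..n}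
  (identity outside); composition is right-to-left (function composition).\<close>

definition fpf_inv :: "nat \<Rightarrow> (nat \<Rightarrow> nat) set" where
  "fpf_inv m = {z. z permutes {1..m} \<and> z \<circ> z = id \<and> (\<forall>i\<in>{1..m}. z i \<noteq> i)}"

definition s_tr :: "nat \<Rightarrow> nat \<Rightarrow> nat" where
  "s_tr i = transpose i (i + 1)"

definition w0 :: "nat \<Rightarrow> nat \<Rightarrow> nat" where
  "w0 n = (\<lambda>j. if 1 \<le> j \<and> j \<le> n then n + 1 - j else j)"

definition rho :: "nat \<Rightarrow> (nat \<Rightarrow> nat) \<Rightarrow> (nat \<Rightarrow> nat)" where
  "rho n z = w0 n \<circ> z \<circ> s_tr (n - 1) \<circ> w0 n"

fun sigma :: "nat \<Rightarrow> nat \<Rightarrow> nat" where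
  "sigma 0 = id"
| "sigma (Suc i) = s_tr (Suc i) \<circ> sigma i"

definition Y :: "nat \<Rightarrow> nat \<Rightarrow> (nat \<Rightarrow> nat) set" where
  "Y n i = (\<lambda>y. sigma i \<circ> y \<circ> inv (sigma i)) ` (rho n ` fpf_inv (n - 2))"

end

theory Submission
  imports Defs
begin

lemma conj_fpf:
  assumes p: "p permutes {1..n}" and a: "a \<in> {1..n}" and b: "b \<in> {1..n}"
  shows "(\<lambda>y. p \<circ> y \<circ> inv p) ` {y \<in> fpf_inv n. y a = b} = {z \<in> fpf_inv n. z (p a) = p b}"
proof (intro equalityI subsetI)
  fix z assume "z \<in> (\<lambda>y. p \<circ> y \<circ> inv p) ` {y \<in> fpf_inv n. y a = b}"
  then obtain y where z: "z = p \<circ> y \<circ> inv p" and y: "y \<in> fpf_inv n" "y a = b" by auto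
  have yp: "y permutes {1..n}" and yy: "y \<circ> y = id" and yf: "\<forall>i\<in>{1..n}. y i \<noteq> i"
    using y unfolding fpf_inv_def by auto
  have "z permutes {1..n}" unfolding z
    by (intro permutes_compose permutes_inv p yp)
  moreover have "z \<circ> z = id"
    unfolding z fun_eq_iff using permutes_inverses[OF p] yy by (simp add: fun_eq_iff)
  moreover have "\<forall>i\<in>{1..n}. z i \<noteq> i"
  proof
    fix i assume i: "i \<in> {1..n}"
    have "inv p i \<in> {1..n}" using i permutes_in_image[OF permutes_inv[OF p]] by blast
    then have "y (inv p i) \<noteq> inv p i" using yf by blast
    then show "z i \<noteq> i" unfolding z using permutes_inverses[OF p]
      by (metis comp_apply)
  qed
  moreover have "z (p a) = p b" unfolding z using permutes_inverses[OF p] y(2) by simp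
  ultimately show "z \<in> {z \<in> fpf_inv n. z (p a) = p b}" unfolding fpf_inv_def by auto
next
  fix z assume "z \<in> {z \<in> fpf_inv n. z (p a) = p b}"
  then have zp: "z permutes {1..n}" and zz: "z \<circ> z = id" and zf: "\<forall>i\<in>{1..n}. z i \<noteq> i"
    and zab: "z (p a) = p b"
    unfolding fpf_inv_def by auto
  define y where "y = inv p \<circ> z \<circ> p"
  have "y permutes {1..n}" unfolding y_def
    by (intro permutes_compose permutes_inv p zp)
  moreover have "y \<circ> y = id"
    unfolding y_def using permutes_inverses[OF p] zz by (simp add: fun_eq_iff)
  moreover have "\<forall>i\<in>{1..n}. y i \<noteq> i"
  proof
    fix i assume i: "i \<in> {1..n}"
    have "p i \<in> {1..n}" using i permutes_in_image[OF p] by blast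
    then have "z (p i) \<noteq> p i" using zf by blast
    then show "y i \<noteq> i" unfolding y_def using permutes_inverses[OF p]
      by (metis comp_apply)
  qed
  moreover have "y a = b" unfolding y_def using permutes_inverses[OF p] zab by simp
  moreover have "z = p \<circ> y \<circ> inv p" unfolding y_def using permutes_inverses[OF p]
    by (simp add: fun_eq_iff)
  ultimately show "z \<in> (\<lambda>y. p \<circ> y \<circ> inv p) ` {y \<in> fpf_inv n. y a = b}"
    unfolding fpf_inv_def by blast
qed

lemma sigma_props:
  assumes "i \<le> n - 1" "n \<ge> 2"
  shows "sigma i permutes {1..n} \<and> sigma i 1 = i + 1 \<and> (i \<ge> 1 \<longrightarrow> sigma i 2 = 1)"
  using assms
proof (induction i)
  case 0
  then show ?case using permutes_id[of "{1..n}"] by (simp add: id_def)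
next
  case (Suc i)
  then have IH: "sigma i permutes {1..n}" "sigma i 1 = i + 1" "i \<ge> 1 \<longrightarrow> sigma i 2 = 1" by auto
  have t: "s_tr (Suc i) permutes {1..n}" unfolding s_tr_def
    using Suc.prems by (intro permutes_swap_id) auto
  have "sigma (Suc i) permutes {1..n}" using permutes_compose[OF IH(1) t] by simp
  moreover have "sigma (Suc i) 1 = Suc i + 1" using IH(2) by (simp add: s_tr_def)
  moreover have "sigma (Suc i) 2 = 1"
  proof (cases "i = 0")
    case True then show ?thesis by (simp add: s_tr_def transpose_def)
  next
    case False then show ?thesis using IH(3) by (simp add: s_tr_def transpose_def)
  qed
  ultimately show ?case by (simp del: sigma.simps add: sigma.simps(2)[symmetric])
qed

lemma w0_props:
  assumes "n \<ge> 1"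
  shows "w0 n permutes {1..n}" "w0 n \<circ> w0 n = id" "inv (w0 n) = w0 n"
proof -
  show ww: "w0 n \<circ> w0 n = id" unfolding w0_def by (auto simp: fun_eq_iff)
  show "inv (w0 n) = w0 n" by (rule inv_unique_comp[OF ww ww])
  have "bij (w0 n)" using ww by (metis bij_betw_def comp_eq_id_dest inj_on_inverseI o_bij)
  moreover have "w0 n ` {1..n} = {1..n}"
  proof (intro equalityI subsetI)
    fix x assume "x \<in> w0 n ` {1..n}" then show "x \<in> {1..n}" unfolding w0_def by auto
  next
    fix x assume x: "x \<in> {1..n}"
    then have "x = w0 n (w0 n x)" using ww by (metis comp_apply id_apply)
    moreover have "w0 n x \<in> {1..n}" using x unfolding w0_def by auto
    ultimately show "x \<in> w0 n ` {1..n}" by blast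
  qed
  ultimately have "bij_betw (w0 n) {1..n} {1..n}"
    by (metis bij_betw_subset subset_UNIV)
  then show "w0 n permutes {1..n}"
    by (rule bij_imp_permutes) (auto simp: w0_def)
qed

lemma shift_fpf:
  assumes n: "n \<ge> 4"
  shows "(\<lambda>z. z \<circ> s_tr (n - 1)) ` fpf_inv (n - 2) = {x \<in> fpf_inv n. x n = n - 1}"
proof (intro equalityI subsetI)
  have t: "s_tr (n - 1) = transpose (n - 1) n" unfolding s_tr_def using n by simp
  fix x assume "x \<in> (\<lambda>z. z \<circ> s_tr (n - 1)) ` fpf_inv (n - 2)"
  then obtain z where x: "x = z \<circ> transpose (n - 1) n" and z: "z \<in> fpf_inv (n - 2)"
    using t by auto
  have zp: "z permutes {1..n-2}" and zz: "z \<circ> z = id" and zf: "\<forall>i\<in>{1..n-2}. z i \<noteq> i"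
    using z unfolding fpf_inv_def by auto
  have zin: "\<And>j. j \<in> {1..n-2} \<Longrightarrow> z j \<in> {1..n-2}" using permutes_in_image[OF zp] by blast
  have zout: "\<And>j. j \<notin> {1..n-2} \<Longrightarrow> z j = j" using zp unfolding permutes_def by blast
  have zp2: "z permutes {1..n}" using zp by (rule permutes_subset) auto
  have "n - 1 \<notin> {1..n-2}" "n \<notin> {1..n-2}" using n by auto
  then have a: "z (n - 1) = n - 1" "z n = n" using zout by blast+
  have "x permutes {1..n}" unfolding x
    by (intro permutes_compose zp2 permutes_swap_id) (use n in auto)
  moreover have "x \<circ> x = id"
  proof
    fix j
    show "(x \<circ> x) j = id j"
    proof (cases "j \<in> {1..n-2}")
      case True
      then have "z j \<in> {1..n-2}" using zin by blast
      then have "transpose (n - 1) n (z j) = z j" using True n by (auto simp: transpose_def)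
      moreover have "transpose (n - 1) n j = j" using True n by (auto simp: transpose_def)
      ultimately show ?thesis unfolding x using zz by (simp add: fun_eq_iff)
    next
      case False
      consider "j = n - 1" | "j = n" | "j \<noteq> n - 1 \<and> j \<noteq> n" by blast
      then show ?thesis
      proof cases
        case 1 then show ?thesis unfolding x using a n by simp
      next
        case 2 then show ?thesis unfolding x using a n by simp
      next
        case 3
        then have "transpose (n - 1) n j = j" by simp
        moreover have "z j = j" using False zout by blast
        ultimately show ?thesis unfolding x by simp
      qed
    qed
  qed
  moreover have "\<forall>i\<in>{1..n}. x i \<noteq> i"
  proof
    fix i assume i: "i \<in> {1..n}"
    show "x i \<noteq> i"
    proof (cases "i \<in> {1..n-2}")
      case True
      then show ?thesis unfolding x using zf n by (auto simp: transpose_def)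
    next
      case False
      then have "i = n - 1 \<or> i = n" using i by auto
      then show ?thesis unfolding x using a n by (auto simp: transpose_def)
    qed
  qed
  moreover have "x n = n - 1" unfolding x using a n by simp
  ultimately show "x \<in> {x \<in> fpf_inv n. x n = n - 1}" unfolding fpf_inv_def by auto
next
  have t: "s_tr (n - 1) = transpose (n - 1) n" unfolding s_tr_def using n by simp
  fix x assume "x \<in> {x \<in> fpf_inv n. x n = n - 1}"
  then have xp: "x permutes {1..n}" and xx: "x \<circ> x = id" and xf: "\<forall>i\<in>{1..n}. x i \<noteq> i"
    and xn: "x n = n - 1" unfolding fpf_inv_def by auto
  have xn1: "x (n - 1) = n" using fun_cong[OF xx, of n] xn by simp
  define z where "z = x \<circ> transpose (n - 1) n"
  have zx: "x = z \<circ> s_tr (n - 1)" unfolding z_def t by (simp add: fun_eq_iff)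
  have zp2: "z permutes {1..n}" unfolding z_def
    by (intro permutes_compose xp permutes_swap_id) (use n in auto)
  have "z permutes {1..n-2}"
    by (rule permutes_superset[OF zp2]) (use n xn xn1 in \<open>auto simp: z_def transpose_def\<close>)
  moreover have xin: "\<And>j. j \<in> {1..n-2} \<Longrightarrow> x j \<in> {1..n-2}"
  proof -
    fix j assume j: "j \<in> {1..n-2}"
    have "j \<in> {1..n}" using j by auto
    then have "x j \<in> {1..n}" using permutes_in_image[OF xp] by blast
    moreover have xxj: "x (x j) = j" using fun_cong[OF xx, of j] by simp
    moreover have "x j \<noteq> n"
    proof
      assume "x j = n" then have "j = n - 1" using xxj xn by simp
      then show False using j n by auto
    qed
    moreover have "x j \<noteq> n - 1"
    proof
      assume "x j = n - 1" then have "j = n" using xxj xn1 by simp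
      then show False using j n by auto
    qed
    ultimately show "x j \<in> {1..n-2}" by auto
  qed
  moreover have xout: "\<And>j. j \<notin> {1..n} \<Longrightarrow> x j = j" using xp unfolding permutes_def by blast
  moreover have "z \<circ> z = id"
  proof
    fix j
    show "(z \<circ> z) j = id j"
    proof (cases "j \<in> {1..n-2}")
      case True
      then have "x j \<in> {1..n-2}" using xin by blast
      then have "transpose (n - 1) n (x j) = x j" using True n by (auto simp: transpose_def)
      moreover have "transpose (n - 1) n j = j" using True n by (auto simp: transpose_def)
      ultimately show ?thesis unfolding z_def using xx by (simp add: fun_eq_iff)
    next
      case False
      then have "j = n - 1 \<or> j = n \<or> j \<notin> {1..n}" using n by auto
      then consider "j = n - 1" | "j = n" | "j \<notin> {1..n}" by blast
      then show ?thesis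
      proof cases
        case 1 then show ?thesis unfolding z_def using xn xn1 n by simp
      next
        case 2 then show ?thesis unfolding z_def using xn xn1 n by simp
      next
        case 3
        then have "j \<noteq> n - 1" "j \<noteq> n" using n by auto
        then have "transpose (n - 1) n j = j" by simp
        moreover have "x j = j" using 3 xout by blast
        ultimately show ?thesis unfolding z_def by simp
      qed
    qed
  qed
  moreover have "\<forall>i\<in>{1..n-2}. z i \<noteq> i"
    using xf n by (auto simp: z_def transpose_def)
  ultimately have "z \<in> fpf_inv (n - 2)" unfolding fpf_inv_def by auto
  then show "x \<in> (\<lambda>z. z \<circ> s_tr (n - 1)) ` fpf_inv (n - 2)" using zx by blast
qed

lemma Y1_char:
  assumes n: "n \<ge> 4"
  shows "rho n ` fpf_inv (n - 2) = {z \<in> fpf_inv n. z 1 = 2}"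
proof -
  have w: "w0 n permutes {1..n}" "inv (w0 n) = w0 n" using w0_props n by auto
  have "rho n ` fpf_inv (n - 2) = (\<lambda>y. w0 n \<circ> y \<circ> inv (w0 n)) ` ((\<lambda>z. z \<circ> s_tr (n - 1)) ` fpf_inv (n - 2))"
    unfolding rho_def w(2) image_image by (simp add: comp_assoc)
  also have "\<dots> = (\<lambda>y. w0 n \<circ> y \<circ> inv (w0 n)) ` {x \<in> fpf_inv n. x n = n - 1}"
    using shift_fpf[OF n] by simp
  also have "\<dots> = {z \<in> fpf_inv n. z (w0 n n) = w0 n (n - 1)}"
    by (rule conj_fpf[OF w(1)]) (use n in auto)
  also have "w0 n n = 1" using n by (simp add: w0_def)
  also have "w0 n (n - 1) = 2" using n by (simp add: w0_def)
  finally show ?thesis .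
qed

lemma Yi_char:
  assumes n: "n \<ge> 4" and i: "i \<in> {1..n-1}"
  shows "Y n i = {z \<in> fpf_inv n. z 1 = i + 1}"
proof -
  have s: "sigma i permutes {1..n}" "sigma i 1 = i + 1" "sigma i 2 = 1"
    using sigma_props[of i n] n i by auto
  have "Y n i = {z \<in> fpf_inv n. z (sigma i 1) = sigma i 2}"
    unfolding Y_def Y1_char[OF n] by (rule conj_fpf[OF s(1)]) (use n in auto)
  also have "\<dots> = {z \<in> fpf_inv n. z 1 = i + 1}"
    unfolding s(2,3) fpf_inv_def by (auto simp: fun_eq_iff) (metis comp_apply id_apply)+
  finally show ?thesis .
qed

theorem theorem3p3:
  fixes n :: nat
  assumes "even n" and "n \<ge> 4"
  shows "(\<forall>i\<in>{1..n-1}. Y n i = {z \<in> fpf_inv n. z 1 = i + 1})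
       \<and> fpf_inv n = (\<Union>i\<in>{1..n-1}. Y n i)
       \<and> disjoint_family_on (Y n) {1..n-1}"
proof (intro conjI)
  show A: "\<forall>i\<in>{1..n-1}. Y n i = {z \<in> fpf_inv n. z 1 = i + 1}"
    using Yi_char[OF assms(2)] by blast
  show "fpf_inv n = (\<Union>i\<in>{1..n-1}. Y n i)"
  proof (intro equalityI subsetI)
    fix z assume z: "z \<in> fpf_inv n"
    then have "z 1 \<in> {1..n}" "z 1 \<noteq> 1" using assms(2) unfolding fpf_inv_def
      using permutes_in_image by fastforce+
    then have "z 1 - 1 \<in> {1..n-1}" "z 1 = (z 1 - 1) + 1" by auto
    then show "z \<in> (\<Union>i\<in>{1..n-1}. Y n i)" using A z by blast
  next
    fix z assume "z \<in> (\<Union>i\<in>{1..n-1}. Y n i)"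
    then show "z \<in> fpf_inv n" using A by blast
  qed
  show "disjoint_family_on (Y n) {1..n-1}"
    unfolding disjoint_family_on_def using A by auto
qed

end
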